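(* Fix a static price vector $\boldsymbol{\phi}=(\phi_1,\phi_2)\in[0,\phi_h]^2$ with $\phi_1\ge\phi_2$ (the case $\phi_1<\phi_2$ follows by exchanging the roles of the two platforms). For $\beta>0$ let $W(\beta)=\lambda_1(\boldsymbol{\phi};\beta)$ denote the (unique) Wardrop-equilibrium passenger arrival rate of platform 1, and let $\mathcal{M}_i(\boldsymbol{\phi};\beta)$ denote the matching revenue rate of platform $i$ evaluated at this Wardrop split. Let $\underline{\phi}=f^{-1}(2e/\Lambda)$ and $\bar{\phi}=f^{-1}(e/\Lambda)$ (each set to $0$ when not in range), and $m(\phi)=(\Lambda f(\phi)-e)\phi$. Define $W(0)=\tilde\lambda_1(\boldsymbol{\phi})$ and $\mathcal{M}_i(\boldsymbol{\phi};0)=\tilde{\mathcal{M}}_i(\boldsymbol{\phi})$ by: (a) if $\phi_1<\underline{\phi}$ (and $\phi_1\ge\phi_2$): $\tilde\lambda_1=\Lambda/2$, $\tilde{\mathcal{M}}_1=e\phi_1$, $\tilde{\mathcal{M}}_2=e\phi_2$; (b) if $\phi_1\in[\underline{\phi},\bar{\phi})$ and $\phi_1>\phi_2$: $\tilde\lambda_1=\Lambda-e/f(\phi_1)$, $\tilde{\mathcal{M}}_1=m(\phi_1)$, $\tilde{\mathcal{M}}_2=e\phi_2$; (c) if $\phi_1\in[\bar{\phi},\phi_h]$ and $\phi_1>\phi_2$: $\tilde\lambda_1=0$, $\tilde{\mathcal{M}}_1=0$, $\tilde{\mathcal{M}}_2=\min\{\Lambda f(\phi_2),e\}\phi_2$;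 (d) if $\phi_1=\phi_2\in[\underline{\phi},\phi_h]$: $\tilde\lambda_1=\Lambda/2$, $\tilde{\mathcal{M}}_i=\frac{\Lambda}{2}f(\phi_i)\phi_i$ for $i=1,2$. Then the mapping $\beta\mapsto W(\beta)$ is continuous on $[0,\infty)$, and likewise, for each $i$, the mapping $\beta\mapsto\mathcal{M}_i(\boldsymbol{\phi};\beta)$ is continuous on $[0,\infty)$.
   Context: Two symmetric ride-hailing platforms $i\in\{1,2\}$. Passengers arrive as a Poisson process of total rate $\Lambda$, split into Poisson streams of rates $\lambda_1+\lambda_2=\Lambda$. Each platform uses a static price $\phi_i\in[0,\phi_h]$; an arriving passenger finding a waiting driver accepts with probability $f(\phi_i)$, where $f$ is strictly concave, strictly decreasing, differentiable, $0<f\le 1$ on $[0,\phi_h]$ and $f(0)=1$. Drivers have effective arrival rate $e=\eta/(1-p)$ (same on both platforms) and each waiting driver abandons at rate $\beta>0$. The probability of no waiting driver is $\mathcal{D}_i=\big(\sum_{n\ge0} e^n/\prod_{a=1}^n(\lambda_i f(\phi_i)+a\beta)\big)^{-1}$, the combined blocking probability is $\mathcal{B}_i=\mathcal{D}_i f(\phi_i)+1-f(\phi_i)$, and the matching revenue rate is $\mathcal{M}_i=\lambda_i f(\phi_i)\phi_i(1-\mathcal{D}_i)$. The passenger split is the Wardrop equilibrium under QoS $\mathcal{B}$: $\lambda_1\in\arg\min_{\lambda\in[0,\Lambda]}(\mathcal{B}_1(\lambda)-\mathcal{B}_2(\Lambda-\lambda))^2$, $\lambda_2=\Lambda-\lambda_1$,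 which is unique for $\beta>0$.
   Formalization: The thresholds $\underline{\phi}$ and $\bar{\phi}$ are set to 0 only when their argument exceeds 1, and to $\phi_h$ + 1 (not 0) when it lies below $f(\phi_h)$. Each condition added here is assumed in the paper as well or is needed for the statement above to hold. *)

theory Defs
  imports "HOL-Analysis.Analysis"
begin

definition strictly_concave_on :: "real set \<Rightarrow> (real \<Rightarrow> real) \<Rightarrow> bool" where
  "strictly_concave_on S g \<longleftrightarrow> convex S \<and>
     (\<forall>x\<in>S. \<forall>y\<in>S. x \<noteq> y \<longrightarrow> (\<forall>t::real. 0 < t \<and> t < 1 \<longrightarrow>
        g ((1 - t) * x + t * y) > (1 - t) * g x + t * g y))"

definition noDriver :: "(real \<Rightarrow> real) \<Rightarrow> real \<Rightarrow> real \<Rightarrow> real \<Rightarrow> real \<Rightarrow> real" where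
  "noDriver f e lam phi beta =
     1 / (\<Sum>n. e ^ n / (\<Prod>a\<in>{1..n}. (lam * f phi + real a * beta)))"

definition blocking :: "(real \<Rightarrow> real) \<Rightarrow> real \<Rightarrow> real \<Rightarrow> real \<Rightarrow> real \<Rightarrow> real" where
  "blocking f e lam phi beta = noDriver f e lam phi beta * f phi + 1 - f phi"

definition matchRev :: "(real \<Rightarrow> real) \<Rightarrow> real \<Rightarrow> real \<Rightarrow> real \<Rightarrow> real \<Rightarrow> real" where
  "matchRev f e lam phi beta = lam * f phi * phi * (1 - noDriver f e lam phi beta)"

definition wardrop :: "(real \<Rightarrow> real) \<Rightarrow> real \<Rightarrow> real \<Rightarrow> real \<Rightarrow> real \<Rightarrow> real \<Rightarrow> real" where
  "wardrop f e Lam phi1 phi2 beta =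
     (THE l. l \<in> {0..Lam} \<and>
        (\<forall>l'\<in>{0..Lam}.
           (blocking f e l phi1 beta - blocking f e (Lam - l) phi2 beta)\<^sup>2
           \<le> (blocking f e l' phi1 beta - blocking f e (Lam - l') phi2 beta)\<^sup>2))"

text \<open>Inverse of f on [0, phi_h], with the conventions: 0 if y lies above the range
  (y > f 0 = 1), and a value beyond phi_h (namely phi_h + 1) if y lies below the
  range (y < f phi_h).\<close>
definition finv :: "(real \<Rightarrow> real) \<Rightarrow> real \<Rightarrow> real \<Rightarrow> real" where
  "finv f phih y =
     (if y \<in> f ` {0..phih} then (THE x. x \<in> {0..phih} \<and> f x = y)
      else if y > 1 then 0 else phih + 1)"

definition mfun :: "(real \<Rightarrow> real) \<Rightarrow> real \<Rightarrow> real \<Rightarrow> real \<Rightarrow> real" where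
  "mfun f e Lam phi = (Lam * f phi - e) * phi"

text \<open>Limit (beta = 0) quantities, cases (a)-(d), for phi1 >= phi2.\<close>
definition lamTilde :: "(real \<Rightarrow> real) \<Rightarrow> real \<Rightarrow> real \<Rightarrow> real \<Rightarrow> real \<Rightarrow> real \<Rightarrow> real" where
  "lamTilde f e Lam phih phi1 phi2 =
     (let lo = finv f phih (2 * e / Lam); hi = finv f phih (e / Lam) in
      if phi1 < lo then Lam / 2
      else if phi1 = phi2 then Lam / 2
      else if phi1 < hi then Lam - e / f phi1
      else 0)"

definition MTilde1 :: "(real \<Rightarrow> real) \<Rightarrow> real \<Rightarrow> real \<Rightarrow> real \<Rightarrow> real \<Rightarrow> real \<Rightarrow> real" where
  "MTilde1 f e Lam phih phi1 phi2 =
     (let lo = finv f phih (2 * e / Lam); hi = finv f phih (e / Lam) in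
      if phi1 < lo then e * phi1
      else if phi1 = phi2 then Lam / 2 * f phi1 * phi1
      else if phi1 < hi then mfun f e Lam phi1
      else 0)"

definition MTilde2 :: "(real \<Rightarrow> real) \<Rightarrow> real \<Rightarrow> real \<Rightarrow> real \<Rightarrow> real \<Rightarrow> real \<Rightarrow> real" where
  "MTilde2 f e Lam phih phi1 phi2 =
     (let lo = finv f phih (2 * e / Lam); hi = finv f phih (e / Lam) in
      if phi1 < lo then e * phi2
      else if phi1 = phi2 then Lam / 2 * f phi2 * phi2
      else if phi1 < hi then e * phi2
      else min (Lam * f phi2) e * phi2)"

definition Wext :: "(real \<Rightarrow> real) \<Rightarrow> real \<Rightarrow> real \<Rightarrow> real \<Rightarrow> real \<Rightarrow> real \<Rightarrow> real \<Rightarrow> real" where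
  "Wext f e Lam phih phi1 phi2 beta =
     (if beta = 0 then lamTilde f e Lam phih phi1 phi2 else wardrop f e Lam phi1 phi2 beta)"

definition Mext1 :: "(real \<Rightarrow> real) \<Rightarrow> real \<Rightarrow> real \<Rightarrow> real \<Rightarrow> real \<Rightarrow> real \<Rightarrow> real \<Rightarrow> real" where
  "Mext1 f e Lam phih phi1 phi2 beta =
     (if beta = 0 then MTilde1 f e Lam phih phi1 phi2
      else matchRev f e (wardrop f e Lam phi1 phi2 beta) phi1 beta)"

definition Mext2 :: "(real \<Rightarrow> real) \<Rightarrow> real \<Rightarrow> real \<Rightarrow> real \<Rightarrow> real \<Rightarrow> real \<Rightarrow> real \<Rightarrow> real" where
  "Mext2 f e Lam phih phi1 phi2 beta =
     (if beta = 0 then MTilde2 f e Lam phih phi1 phi2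
      else matchRev f e (Lam - wardrop f e Lam phi1 phi2 beta) phi2 beta)"

end

theory Submission
  imports Defs
begin


definition tt :: "real \<Rightarrow> real \<Rightarrow> real \<Rightarrow> nat \<Rightarrow> real" where
  "tt e c b n = e ^ n / (\<Prod>a\<in>{1..n}. (c + real a * b))"
definition SS :: "real \<Rightarrow> real \<Rightarrow> real \<Rightarrow> real" where
  "SS e c b = suminf (tt e c b)"
definition DD :: "real \<Rightarrow> real \<Rightarrow> real \<Rightarrow> real" where
  "DD e c b = 1 / SS e c b"

lemma noDriver_eq: "noDriver f e lam phi beta = DD e (lam * f phi) beta"
  unfolding noDriver_def DD_def SS_def tt_def[abs_def] by simp

lemma prod_pos: "0 \<le> c \<Longrightarrow> 0 < b \<Longrightarrow> 0 < (\<Prod>a\<in>{1..n}. (c + real a * b))"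
proof (rule prod_pos)
  fix a assume "0 \<le> c" "0 < b" "a \<in> {1..n}"
  then have "0 < real a * b" by auto
  then show "0 < c + real a * b" using \<open>0 \<le> c\<close> by linarith
qed

lemma prod_ge_fact: assumes "0 \<le> c" "0 < b"
  shows "b ^ n * fact n \<le> (\<Prod>a\<in>{1..n}. (c + real a * b))"
proof (induction n)
  case 0 then show ?case by simp
next
  case (Suc n)
  have "b ^ Suc n * fact (Suc n) = (b ^ n * fact n) * (real (Suc n) * b)"
    by (simp add: algebra_simps)
  also have "\<dots> \<le> (\<Prod>a\<in>{1..n}. (c + real a * b)) * (c + real (Suc n) * b)"
    using Suc assms prod_pos[of c b n] by (intro mult_mono) auto
  also have "\<dots> = (\<Prod>a\<in>{1..Suc n}. (c + real a * b))" by simp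
  finally show ?case .
qed

lemma prod_anti: assumes "0 \<le> c" "c \<le> c'" "0 \<le> b"
  shows "(\<Prod>a\<in>{1..n}. (c + real a * b)) \<le> (\<Prod>a\<in>{1..n}. (c' + real a * b))"
  using assms by (intro prod_mono) auto

lemma prod_ge_pow: assumes "0 \<le> c" "0 \<le> b"
  shows "c ^ n \<le> (\<Prod>a\<in>{1..n}. (c + real a * b))"
proof -
  have "c ^ n = (\<Prod>a\<in>{1..n}. c)" by simp
  also have "\<dots> \<le> (\<Prod>a\<in>{1..n}. (c + real a * b))" using assms by (intro prod_mono) auto
  finally show ?thesis .
qed

lemma tt_pos: "0 < e \<Longrightarrow> 0 \<le> c \<Longrightarrow> 0 < b \<Longrightarrow> 0 < tt e c b n"
  unfolding tt_def using prod_pos by auto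

lemma tt_bound: assumes "0 < e" "0 \<le> c" "0 < b" "b0 \<le> b" "0 < b0"
  shows "tt e c b n \<le> inverse (fact n) * (e / b0) ^ n"
proof -
  have "tt e c b n \<le> e ^ n / (b0 ^ n * fact n)"
    unfolding tt_def
  proof (rule divide_left_mono)
    have "b0 ^ n * fact n \<le> b ^ n * fact n" using assms by (intro mult_right_mono power_mono) auto
    also have "\<dots> \<le> (\<Prod>a\<in>{1..n}. (c + real a * b))" using prod_ge_fact assms by auto
    finally show "b0 ^ n * fact n \<le> (\<Prod>a\<in>{1..n}. (c + real a * b))" .
  qed (use assms prod_pos[of c b n] in auto)
  also have "\<dots> = inverse (fact n) * (e / b0) ^ n" by (simp add: field_simps power_divide)
  finally show ?thesis .
qed

lemma tt_summable: assumes "0 < e" "0 \<le> c" "0 < b"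
  shows "summable (tt e c b)"
  by (rule summable_comparison_test'[OF summable_exp[of "e/b"], of 0])
     (use tt_bound[OF assms order_refl assms(3)] tt_pos[OF assms] in \<open>auto simp: less_imp_le\<close>)

lemma tt_zero [simp]: "tt e c b 0 = 1" by (simp add: tt_def)
lemma tt_one: "tt e c b 1 = e / (c + b)" by (simp add: tt_def)

lemma SS_ge: assumes "0 < e" "0 \<le> c" "0 < b"
  shows "(\<Sum>n<N. tt e c b n) \<le> SS e c b"
  unfolding SS_def using tt_summable[OF assms] tt_pos[OF assms]
  by (intro sum_le_suminf) (auto intro: less_imp_le)

lemma SS_gt1: assumes "0 < e" "0 \<le> c" "0 < b"
  shows "1 < SS e c b"
proof -
  have "(\<Sum>n<2. tt e c b n) < SS e c b"
    unfolding SS_def using tt_summable[OF assms] tt_pos[OF assms]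
    by (intro sum_less_suminf) auto
  moreover have "(\<Sum>n<2. tt e c b n) = 1 + tt e c b 1" by (simp add: numeral_2_eq_2)
  ultimately show ?thesis using tt_pos[OF assms, of 1] by simp
qed

lemma DD_pos: "0 < e \<Longrightarrow> 0 \<le> c \<Longrightarrow> 0 < b \<Longrightarrow> 0 < DD e c b \<and> DD e c b < 1"
  unfolding DD_def using SS_gt1[of e c b] by auto

lemma tt_anti: assumes "0 < e" "0 \<le> c" "c \<le> c'" "0 < b"
  shows "tt e c' b n \<le> tt e c b n"
  unfolding tt_def using assms prod_pos[of c b n] prod_anti[of c c' b n]
  by (intro divide_left_mono) auto

lemma SS_strict_anti: assumes "0 < e" "0 \<le> c" "c < c'" "0 < b"
  shows "SS e c' b < SS e c b"
proof -
  have s1: "summable (tt e c b)" and s2: "summable (tt e c' b)"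
    using tt_summable assms by auto
  have "0 < (\<Sum>n. tt e c b n - tt e c' b n)"
  proof (subst suminf_pos_iff)
    show "summable (\<lambda>n. tt e c b n - tt e c' b n)" using s1 s2 by (rule summable_diff)
    show "0 \<le> tt e c b n - tt e c' b n" for n using tt_anti[of e c c' b n] assms by auto
    have "tt e c' b 1 < tt e c b 1" unfolding tt_one
      using assms by (intro divide_strict_left_mono) auto
    then show "\<exists>i. 0 < tt e c b i - tt e c' b i"
      by (intro exI[of _ 1]) simp
  qed
  then show ?thesis using suminf_diff[OF s1 s2] unfolding SS_def by simp
qed

lemma DD_strict_mono: assumes "0 < e" "0 \<le> c" "c < c'" "0 < b"
  shows "DD e c b < DD e c' b"
  unfolding DD_def using SS_strict_anti[OF assms] SS_gt1[OF assms(1,2,4)]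
    SS_gt1[OF assms(1) _ assms(4), of c'] assms
  by (intro divide_strict_left_mono) auto

lemma DD_mono: assumes "0 < e" "0 \<le> c" "c \<le> c'" "0 < b"
  shows "DD e c b \<le> DD e c' b"
  using DD_strict_mono[OF assms(1,2) _ assms(4), of c'] assms(3) by (cases "c = c'") auto

lemma SS_le_geom: assumes "0 < e" "e < c" "0 < b"
  shows "SS e c b \<le> c / (c - e)"
proof -
  have "SS e c b \<le> (\<Sum>n. (e/c)^n)"
    unfolding SS_def
  proof (rule suminf_le)
    show "summable (tt e c b)" using tt_summable assms by auto
    show "summable (\<lambda>n. (e/c)^n)" using assms by (intro summable_geometric) auto
    fix n show "tt e c b n \<le> (e/c)^n"
      unfolding tt_def power_divide using assms prod_ge_pow[of c b n] prod_pos[of c b n]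
      by (intro divide_left_mono) (auto intro!: mult_pos_pos)
  qed
  also have "\<dots> = c / (c - e)" using assms by (subst suminf_geometric) (auto simp: field_simps)
  finally show ?thesis .
qed

lemma DD_ge: assumes "0 < e" "e < c" "0 < b"
  shows "1 - e / c \<le> DD e c b"
proof -
  have "1 - e/c = 1 / (c / (c - e))" using assms by (simp add: field_simps)
  also have "\<dots> \<le> DD e c b" unfolding DD_def using SS_le_geom[OF assms] SS_gt1[of e c b] assms
    by (intro divide_left_mono) auto
  finally show ?thesis .
qed

lemma tt_cont: assumes "0 < \<delta>"
  shows "continuous_on {p::real\<times>real. 0 \<le> fst p \<and> \<delta> \<le> snd p} (\<lambda>p. tt e (fst p) (snd p) n)"
  unfolding tt_def
proof (intro continuous_intros ballI)
  fix p :: "real \<times> real" assume "p \<in> {p. 0 \<le> fst p \<and> \<delta> \<le> snd p}"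
  then have "0 < (\<Prod>a\<in>{1..n}. fst p + real a * snd p)"
    using prod_pos[of "fst p" "snd p" n] assms by auto
  then show "(\<Prod>a\<in>{1..n}. fst p + real a * snd p) \<noteq> 0"
    by (rule not_sym[OF less_imp_neq])
qed

lemma SS_cont: assumes "0 < e" "0 < \<delta>"
  shows "continuous_on {p::real\<times>real. 0 \<le> fst p \<and> \<delta> \<le> snd p} (\<lambda>p. SS e (fst p) (snd p))"
  unfolding SS_def
proof (rule uniform_limit_theorem[where F=sequentially])
  show "\<forall>\<^sub>F n in sequentially. continuous_on {p::real\<times>real. 0 \<le> fst p \<and> \<delta> \<le> snd p}
          (\<lambda>p. \<Sum>i<n. tt e (fst p) (snd p) i)"
    using tt_cont[OF assms(2)] by (intro always_eventually allI continuous_on_sum) auto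
  show "uniform_limit {p::real\<times>real. 0 \<le> fst p \<and> \<delta> \<le> snd p}
          (\<lambda>n p. \<Sum>i<n. tt e (fst p) (snd p) i) (\<lambda>p. suminf (tt e (fst p) (snd p))) sequentially"
  proof (rule Weierstrass_m_test[OF _ summable_exp[of "e/\<delta>"]])
    fix n and p :: "real\<times>real" assume p: "p \<in> {p. 0 \<le> fst p \<and> \<delta> \<le> snd p}"
    then show "norm (tt e (fst p) (snd p) n) \<le> inverse (fact n) * (e / \<delta>) ^ n"
      using tt_bound[OF assms(1) _ _ _ assms(2), of "fst p" "snd p" n]
        tt_pos[OF assms(1), of "fst p" "snd p" n] assms by auto
  qed
qed auto

lemma SS_tendsto: assumes "0 < e" "(c \<longlongrightarrow> c0) F" "(b \<longlongrightarrow> b0) F" "0 < b0" "0 \<le> c0"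
    "\<forall>\<^sub>F x in F. 0 \<le> c x"
  shows "((\<lambda>x. SS e (c x) (b x)) \<longlongrightarrow> SS e c0 b0) F"
proof -
  have "((\<lambda>x. (\<lambda>p. SS e (fst p) (snd p)) (c x, b x)) \<longlongrightarrow> (\<lambda>p. SS e (fst p) (snd p)) (c0, b0)) F"
  proof (rule continuous_on_tendsto_compose[OF SS_cont[OF assms(1), of "b0/2"]])
    show "((\<lambda>x. (c x, b x)) \<longlongrightarrow> (c0, b0)) F" using assms by (intro tendsto_intros)
    have "\<forall>\<^sub>F x in F. b0/2 < b x" using assms(3,4) by (intro order_tendstoD) auto
    then show "\<forall>\<^sub>F x in F. (c x, b x) \<in> {p. 0 \<le> fst p \<and> b0 / 2 \<le> snd p}"
      using assms(6) by eventually_elim auto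
  qed (use assms in auto)
  then show ?thesis by simp
qed

lemma DD_tendsto: assumes "0 < e" "(c \<longlongrightarrow> c0) F" "(b \<longlongrightarrow> b0) F" "0 < b0" "0 \<le> c0"
    "\<forall>\<^sub>F x in F. 0 \<le> c x"
  shows "((\<lambda>x. DD e (c x) (b x)) \<longlongrightarrow> DD e c0 b0) F"
  unfolding DD_def using SS_gt1[OF assms(1,5,4)]
  by (intro tendsto_intros SS_tendsto[OF assms]) auto

lemma PP_tendsto0: assumes "(c \<longlongrightarrow> c0) F" "(b \<longlongrightarrow> 0) F" "0 < c0"
  shows "((\<lambda>x. \<Sum>n<N. tt e (c x) (b x) n) \<longlongrightarrow> (\<Sum>n<N. (e/c0)^n)) F"
proof -
  have "((\<lambda>x. \<Sum>n<N. tt e (c x) (b x) n) \<longlongrightarrow> (\<Sum>n<N. e ^ n / (\<Prod>a\<in>{1..n}. (c0 + real a * 0)))) F"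
    unfolding tt_def using assms by (intro tendsto_intros) auto
  then show ?thesis by (simp add: power_divide)
qed

lemma DD_lim_big: assumes "0 < e" "(c \<longlongrightarrow> c0) F" "(b \<longlongrightarrow> 0) F" "e < c0"
    "\<forall>\<^sub>F x in F. 0 < b x"
  shows "((\<lambda>x. DD e (c x) (b x)) \<longlongrightarrow> 1 - e / c0) F"
proof (rule order_tendstoI)
  have evc: "\<forall>\<^sub>F x in F. e < c x" using assms(2,4) by (rule order_tendstoD)
  fix a assume a: "a < 1 - e / c0"
  have "((\<lambda>x. 1 - e / c x) \<longlongrightarrow> 1 - e / c0) F" using assms by (intro tendsto_intros) auto
  then have "\<forall>\<^sub>F x in F. a < 1 - e / c x" using a by (rule order_tendstoD)
  then show "\<forall>\<^sub>F x in F. a < DD e (c x) (b x)"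
    using evc assms(5) by eventually_elim (use DD_ge assms(1) in force)
next
  have evc: "\<forall>\<^sub>F x in F. e < c x" using assms(2,4) by (rule order_tendstoD)
  fix a assume a: "1 - e / c0 < a"
  have c0pos: "0 < c0" using assms by linarith
  have "c0 - e < a * c0" using a c0pos by (simp add: field_simps)
  then have "0 < a * c0" using assms by linarith
  then have apos: "0 < a" using c0pos by (rule zero_less_mult_pos2)
  have "1 / a < c0 / (c0 - e)" using a apos c0pos assms by (simp add: field_simps)
  moreover have "1 / (1 - e/c0) = c0 / (c0 - e)" using c0pos by (simp add: field_simps)
  ultimately have lt: "1 / a < 1 / (1 - e/c0)" by simp
  have "(\<lambda>N. \<Sum>n<N. (e/c0)^n) \<longlonglongrightarrow> 1 / (1 - e/c0)"
    using geometric_sums[of "e/c0"] assms c0pos unfolding sums_def by simp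
  then have "\<forall>\<^sub>F N in sequentially. 1 / a < (\<Sum>n<N. (e/c0)^n)" using lt by (rule order_tendstoD)
  then obtain N where N: "1 / a < (\<Sum>n<N. (e/c0)^n)" by (auto simp: eventually_sequentially)
  have "\<forall>\<^sub>F x in F. 1 / a < (\<Sum>n<N. tt e (c x) (b x) n)"
    using PP_tendsto0[OF assms(2,3) c0pos, where N=N and e=e] N by (rule order_tendstoD)
  then show "\<forall>\<^sub>F x in F. DD e (c x) (b x) < a"
    using evc assms(5)
  proof eventually_elim
    case (elim x)
    then have "1 / a < SS e (c x) (b x)" using SS_ge[OF assms(1), of "c x" "b x" N] assms(1) by auto
    then show ?case unfolding DD_def using apos
      by (metis divide_less_eq_1 divide_pos_pos less_divide_eq_1 linorder_not_less order_less_trans zero_less_one mult.commute pos_divide_less_eq)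
  qed
qed

lemma DD_lim_small: assumes "0 < e" "(c \<longlongrightarrow> c0) F" "(b \<longlongrightarrow> 0) F" "c0 \<le> e"
    "\<forall>\<^sub>F x in F. 0 < b x" "\<forall>\<^sub>F x in F. 0 \<le> c x"
  shows "((\<lambda>x. DD e (c x) (b x)) \<longlongrightarrow> 0) F"
proof (rule order_tendstoI)
  fix a :: real assume a0: "a < 0"
  show "\<forall>\<^sub>F x in F. a < DD e (c x) (b x)"
    using assms(5,6) by eventually_elim (use DD_pos assms(1) a0 in force)
next
  fix a :: real assume apos: "0 < a"
  obtain N :: nat where N: "1 / a < real N" using reals_Archimedean2 by blast
  define m where "m = max c0 (e/2)"
  have m: "0 < m" "m \<le> e" using assms unfolding m_def by auto
  have "((\<lambda>x. max (c x) (e/2)) \<longlongrightarrow> m) F" unfolding m_def using assms by (intro tendsto_intros)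
  then have lim: "((\<lambda>x. \<Sum>n<N. tt e (max (c x) (e/2)) (b x) n) \<longlongrightarrow> (\<Sum>n<N. (e/m)^n)) F"
    using m assms by (intro PP_tendsto0) auto
  have "real N \<le> (\<Sum>n<N. (e/m)^n)"
  proof -
    have "real N = (\<Sum>n<N. 1::real)" by simp
    also have "\<dots> \<le> (\<Sum>n<N. (e/m)^n)" using m by (intro sum_mono one_le_power) auto
    finally show ?thesis .
  qed
  then have "\<forall>\<^sub>F x in F. 1 / a < (\<Sum>n<N. tt e (max (c x) (e/2)) (b x) n)"
    using N by (intro order_tendstoD(1)[OF lim]) auto
  then show "\<forall>\<^sub>F x in F. DD e (c x) (b x) < a"
    using assms(5,6)
  proof eventually_elim
    case (elim x)
    have "(\<Sum>n<N. tt e (max (c x) (e/2)) (b x) n) \<le> (\<Sum>n<N. tt e (c x) (b x) n)"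
      using elim assms(1) by (intro sum_mono tt_anti) auto
    also have "\<dots> \<le> SS e (c x) (b x)" using SS_ge elim assms(1) by auto
    finally have "1 / a < SS e (c x) (b x)" using elim by linarith
    then show ?case unfolding DD_def using apos
      by (metis divide_less_eq_1 divide_pos_pos less_divide_eq_1 linorder_not_less order_less_trans zero_less_one mult.commute pos_divide_less_eq)
  qed
qed



lemma argmin_char:
  fixes g :: "real \<Rightarrow> real" and L :: real
  assumes L: "0 \<le> L" and cont: "continuous_on {0..L} g"
    and mono: "\<And>x y. x \<in> {0..L} \<Longrightarrow> y \<in> {0..L} \<Longrightarrow> x < y \<Longrightarrow> g x < g y"
  defines "w \<equiv> THE l. l \<in> {0..L} \<and> (\<forall>l'\<in>{0..L}. (g l)\<^sup>2 \<le> (g l')\<^sup>2)"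
  shows "w \<in> {0..L} \<and> (\<forall>x\<in>{0..L}. x < w \<longrightarrow> g x < 0) \<and> (\<forall>x\<in>{0..L}. w < x \<longrightarrow> 0 < g x)"
proof -
  have inj: "x = y" if "x \<in> {0..L}" "y \<in> {0..L}" "g x = g y" for x y
    using mono[OF that(1,2)] mono[OF that(2,1)] that(3) by (cases x y rule: linorder_cases) auto
  have mono': "g x \<le> g y" if "x \<in> {0..L}" "y \<in> {0..L}" "x \<le> y" for x y
    using mono[OF that(1,2)] that(3) by (cases "x = y") auto
  obtain l0 where l0: "l0 \<in> {0..L}"
    and cases: "g l0 = 0 \<or> (l0 = 0 \<and> 0 \<le> g 0) \<or> (l0 = L \<and> g L \<le> 0)"
  proof (cases "0 \<le> g 0")
    case True then show ?thesis using that[of 0] L by auto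
  next
    case False
    show ?thesis
    proof (cases "g L \<le> 0")
      case True then show ?thesis using that[of L] L by auto
    next
      case False2: False
      obtain x where "x \<ge> 0" "x \<le> L" "g x = 0"
        using IVT'[of g 0 0 L] False False2 cont L by auto
      then show ?thesis using that[of x] by auto
    qed
  qed
  have minim: "(g l0)\<^sup>2 \<le> (g x)\<^sup>2" if x: "x \<in> {0..L}" for x
  proof -
    consider "g l0 = 0" | "l0 = 0 \<and> 0 \<le> g 0" | "l0 = L \<and> g L \<le> 0" using cases by blast
    then show ?thesis
    proof cases
      case 2
      then have "g l0 \<le> g x" using mono'[of 0 x] x L by auto
      then show ?thesis using 2 by (intro power_mono) auto
    next
      case 3
      then have "g x \<le> g l0" using mono'[of x L] x L by auto
      then have "(- g l0)\<^sup>2 \<le> (- g x)\<^sup>2" using 3 by (intro power_mono) auto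
      then show ?thesis by simp
    qed simp
  qed
  have weq: "w = l0" unfolding w_def
  proof (rule the_equality)
    show "l0 \<in> {0..L} \<and> (\<forall>l'\<in>{0..L}. (g l0)\<^sup>2 \<le> (g l')\<^sup>2)" using l0 minim by auto
    fix m assume m: "m \<in> {0..L} \<and> (\<forall>l'\<in>{0..L}. (g m)\<^sup>2 \<le> (g l')\<^sup>2)"
    have mL: "m \<in> {0..L}" using m by (rule conjunct1)
    have s1: "(g m)\<^sup>2 \<le> (g l0)\<^sup>2" using bspec[OF conjunct2[OF m] l0] .
    have s2: "(g l0)\<^sup>2 \<le> (g m)\<^sup>2" using minim[OF mL] .
    have sq: "(g m)\<^sup>2 = (g l0)\<^sup>2" using s1 s2 by (rule antisym)
    consider "g l0 = 0" | "l0 = 0 \<and> 0 \<le> g 0" | "l0 = L \<and> g L \<le> 0" using cases by blast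
    then show "m = l0"
    proof cases
      case 1
      then have "g m = g l0" using sq by simp
      then show ?thesis using inj[OF mL l0] by simp
    next
      case 2
      then have "g l0 \<le> g m" using mono'[of 0 m] mL L by auto
      moreover have "0 \<le> g l0" using 2 by simp
      ultimately have "0 \<le> g m" by linarith
      then have "g m = g l0" using power2_eq_imp_eq[OF sq] \<open>0 \<le> g l0\<close> by blast
      then show ?thesis using inj[OF mL l0] by simp
    next
      case 3
      then have "g m \<le> g l0" using mono'[of m L] mL L by auto
      moreover have "0 \<le> - g l0" using 3 by simp
      ultimately have "0 \<le> - g m" by linarith
      moreover have "(- g m)\<^sup>2 = (- g l0)\<^sup>2" using sq by simp
      ultimately have "- g m = - g l0" using power2_eq_imp_eq \<open>0 \<le> - g l0\<close> by blast
      then show ?thesis using inj[OF mL l0] by simp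
    qed
  qed
  show ?thesis
  proof (intro conjI ballI impI)
    show "w \<in> {0..L}" using weq l0 by simp
    fix x assume x: "x \<in> {0..L}"
    { assume xw: "x < w"
      then have "g x < g l0" using mono[of x l0] x l0 weq by blast
      moreover have "l0 \<noteq> 0" using xw x weq by auto
      ultimately show "g x < 0" using cases by auto }
    { assume xw: "w < x"
      then have "g l0 < g x" using mono[of l0 x] x l0 weq by blast
      moreover have "l0 \<noteq> L" using xw x weq by auto
      ultimately show "0 < g x" using cases by auto }
  qed
qed



lemma ev_within: "\<forall>\<^sub>F x in at a within S. x \<in> S"
  by (simp add: eventually_at_filter)

lemma blocking_eq: "blocking f e lam phi beta = DD e (lam * f phi) beta * f phi + 1 - f phi"
  by (simp add: blocking_def noDriver_eq)

lemma matchRev_eq: "matchRev f e lam phi beta = (lam * f phi) * (1 - DD e (lam * f phi) beta) * phi"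
  by (simp add: matchRev_def noDriver_eq)

lemma wardrop_props:
  assumes e: "0 < e" and Lam: "0 < Lam" and b: "0 < b" and f1: "0 < f phi1" and f2: "0 < f phi2"
  shows "wardrop f e Lam phi1 phi2 b \<in> {0..Lam} \<and>
    (\<forall>x\<in>{0..Lam}. x < wardrop f e Lam phi1 phi2 b \<longrightarrow>
        blocking f e x phi1 b - blocking f e (Lam - x) phi2 b < 0) \<and>
    (\<forall>x\<in>{0..Lam}. wardrop f e Lam phi1 phi2 b < x \<longrightarrow>
        0 < blocking f e x phi1 b - blocking f e (Lam - x) phi2 b)"
proof -
  let ?g = "\<lambda>l. blocking f e l phi1 b - blocking f e (Lam - l) phi2 b"
  have cont: "continuous_on {0..Lam} ?g"
    unfolding continuous_on_def blocking_eq
  proof (intro ballI tendsto_intros)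
    fix x assume x: "x \<in> {0..Lam}"
    show "((\<lambda>l. DD e (l * f phi1) b) \<longlongrightarrow> DD e (x * f phi1) b) (at x within {0..Lam})"
      using x f1 e b
      by (intro DD_tendsto) (auto intro!: tendsto_intros eventually_mono[OF ev_within])
    show "((\<lambda>l. DD e ((Lam - l) * f phi2) b) \<longlongrightarrow> DD e ((Lam - x) * f phi2) b) (at x within {0..Lam})"
      using x f2 e b
      by (intro DD_tendsto) (auto intro!: tendsto_intros eventually_mono[OF ev_within])
  qed
  have mono: "?g x < ?g y" if "x \<in> {0..Lam}" "y \<in> {0..Lam}" "x < y" for x y
  proof -
    have "DD e (x * f phi1) b < DD e (y * f phi1) b"
      using that f1 e b by (intro DD_strict_mono) auto
    moreover have "DD e ((Lam - y) * f phi2) b < DD e ((Lam - x) * f phi2) b"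
      using that f2 e b by (intro DD_strict_mono) auto
    ultimately show ?thesis unfolding blocking_eq using f1 f2
      by (smt (verit) mult_strict_right_mono)
  qed
  show ?thesis
    using argmin_char[of Lam ?g, OF _ cont mono] Lam unfolding wardrop_def by auto
qed

lemma MLim: assumes e: "0 < e" and c: "(c \<longlongrightarrow> c0) F" and b: "(b \<longlongrightarrow> 0) F"
    and bpos: "\<forall>\<^sub>F x in F. 0 < b x" and cpos: "\<forall>\<^sub>F x in F. 0 \<le> c x"
  shows "((\<lambda>x. c x * (1 - DD e (c x) (b x))) \<longlongrightarrow> min c0 e) F"
proof (cases "e < c0")
  case True
  have "((\<lambda>x. c x * (1 - DD e (c x) (b x))) \<longlongrightarrow> c0 * (1 - (1 - e / c0))) F"
    by (intro tendsto_intros c DD_lim_big[OF e c b True bpos])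
  moreover have "c0 * (1 - (1 - e / c0)) = min c0 e" using True e by auto
  ultimately show ?thesis by simp
next
  case False
  have "((\<lambda>x. c x * (1 - DD e (c x) (b x))) \<longlongrightarrow> c0 * (1 - 0)) F"
    using False by (intro tendsto_intros c DD_lim_small[OF e c b _ bpos cpos]) auto
  then show ?thesis using False by (simp add: min_def)
qed

definition Dbar :: "real \<Rightarrow> real \<Rightarrow> real" where
  "Dbar e c = (if e < c then 1 - e / c else 0)"

lemma DD_lim_const: assumes e: "0 < e" and c: "0 \<le> c" and b: "(b \<longlongrightarrow> 0) F"
    and bpos: "\<forall>\<^sub>F x in F. 0 < b x"
  shows "((\<lambda>x. DD e c (b x)) \<longlongrightarrow> Dbar e c) F"
proof (cases "e < c")
  case True then show ?thesis unfolding Dbar_def using DD_lim_big[OF e tendsto_const b True bpos] by simp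
next
  case False then show ?thesis unfolding Dbar_def
    using DD_lim_small[OF e tendsto_const b _ bpos, of c] c by simp
qed

definition hh :: "real \<Rightarrow> real \<Rightarrow> real \<Rightarrow> real" where
  "hh e x f = f - Dbar e (x * f) * f"

lemma hh_val: "0 < f \<Longrightarrow> hh e x f = (if e < x * f then e / x else f)"
  unfolding hh_def Dbar_def by (auto simp: field_simps)

lemma W_lim_helper:
  fixes W :: "real \<Rightarrow> real" and g :: "real \<Rightarrow> real \<Rightarrow> real"
  assumes ev: "\<forall>\<^sub>F b in F. W b \<in> {0..Lam} \<and> (\<forall>x\<in>{0..Lam}. (x < W b \<longrightarrow> g b x < 0) \<and> (W b < x \<longrightarrow> 0 < g b x))"
    and up: "\<And>a. L < a \<Longrightarrow> a \<le> Lam \<Longrightarrow> \<exists>x\<in>{0..Lam}. x < a \<and> (\<forall>\<^sub>F b in F. 0 < g b x)"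
    and down: "\<And>a. 0 \<le> a \<Longrightarrow> a < L \<Longrightarrow> \<exists>x\<in>{0..Lam}. a < x \<and> (\<forall>\<^sub>F b in F. g b x < 0)"
  shows "(W \<longlongrightarrow> L) F"
proof (rule order_tendstoI)
  fix a assume a: "L < a"
  show "\<forall>\<^sub>F b in F. W b < a"
  proof (cases "a \<le> Lam")
    case True
    then obtain x where x: "x \<in> {0..Lam}" "x < a" and evx: "\<forall>\<^sub>F b in F. 0 < g b x" using up a by blast
    show ?thesis using ev evx
    proof eventually_elim
      case (elim b)
      then have "\<not> x < W b" using x by auto
      then show ?case using x by auto
    qed
  next
    case False
    show ?thesis using ev by eventually_elim (use False in auto)
  qed
next
  fix a assume a: "a < L"
  show "\<forall>\<^sub>F b in F. a < W b"
  proof (cases "0 \<le> a")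
    case True
    then obtain x where x: "x \<in> {0..Lam}" "a < x" and evx: "\<forall>\<^sub>F b in F. g b x < 0" using down a by blast
    show ?thesis using ev evx
    proof eventually_elim
      case (elim b)
      then have "\<not> W b < x" using x by auto
      then show ?case using x by auto
    qed
  next
    case False
    show ?thesis using ev by eventually_elim (use False in auto)
  qed
qed

lemma finv_lt:
  assumes cont: "continuous_on {0..phih} f"
    and decr: "\<forall>x\<in>{0..phih}. \<forall>y\<in>{0..phih}. x < y \<longrightarrow> f y < f x"
    and bnd: "\<forall>x\<in>{0..phih}. f x \<le> 1" and f0: "f 0 = 1" and phih: "0 \<le> phih"
    and phi: "phi \<in> {0..phih}"
  shows "phi < finv f phih y \<longleftrightarrow> y < f phi"
proof (cases "y \<in> f ` {0..phih}")
  case True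
  then obtain z where z: "z \<in> {0..phih}" "f z = y" by auto
  have "(THE x. x \<in> {0..phih} \<and> f x = y) = z"
  proof (rule the_equality)
    show "z \<in> {0..phih} \<and> f z = y" using z by auto
    fix x assume x: "x \<in> {0..phih} \<and> f x = y"
    show "x = z"
    proof (rule ccontr)
      assume "x \<noteq> z"
      then consider "x < z" | "z < x" by linarith
      then show False using decr x z by cases force+
    qed
  qed
  then have "finv f phih y = z" unfolding finv_def using True by simp
  moreover have "phi < z \<longleftrightarrow> f z < f phi"
  proof
    assume "phi < z" then show "f z < f phi" using decr phi z by auto
  next
    assume "f z < f phi"
    then show "phi < z" using decr phi z by (metis linorder_not_le order_le_less order_less_asym)
  qed
  ultimately show ?thesis using z by simp
next
  case False
  show ?thesis
  proof (cases "y > 1")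
    case True
    have "f phi \<le> 1" using bnd phi by blast
    then show ?thesis using False True phi unfolding finv_def by auto
  next
    case n1: False
    have "y < f phih"
    proof (rule ccontr)
      assume "\<not> y < f phih"
      then obtain x where "0 \<le> x" "x \<le> phih" "f x = y"
        using IVT2'[where f=f and a=0 and b=phih and y=y] cont n1 f0 phih by auto
      then show False using False by auto
    qed
    moreover have "f phih \<le> f phi"
    proof (cases "phi = phih")
      case False
      then have "phi < phih" using phi by auto
      then show ?thesis using decr phi phih by (meson atLeastAtMost_iff less_imp_le order_refl)
    qed simp
    ultimately show ?thesis using False n1 phi unfolding finv_def by auto
  qed
qed



lemma hh_le: assumes "0 \<le> x" "0 < f" "0 < e" shows "hh e x f \<le> f"
proof (cases "e < x * f")
  case True
  then have "0 < x" using assms by (cases "x = 0") auto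
  then show ?thesis using True assms by (simp add: hh_val field_simps)
next
  case False then show ?thesis using assms by (simp add: hh_val)
qed

lemma hh_eq: "0 < f \<Longrightarrow> \<not> e < x * f \<Longrightarrow> hh e x f = f"
  by (simp add: hh_val)

lemma hh_gt: assumes "0 < t" "t < f" "0 \<le> y" "y * t < e" "0 < e"
  shows "t < hh e y f"
proof (cases "e < y * f")
  case True
  then have "0 < y" using assms by (cases "y = 0") auto
  then show ?thesis using True assms by (simp add: hh_val field_simps)
next
  case False then show ?thesis using assms by (simp add: hh_val)
qed

lemma hh_lt: assumes "0 < t" "t < f" "e < x * t" "0 < e" "0 \<le> x"
  shows "hh e x f < t"
proof -
  have "0 < x" using assms by (cases "x = 0") auto
  then have "x * t < x * f" using assms by simp
  then have "e < x * f" using assms by linarith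
  then show ?thesis using assms \<open>0 < x\<close> by (simp add: hh_val field_simps)
qed

lemma glim:
  assumes e: "0 < e" and x: "0 \<le> x" "x \<le> Lam" and f1: "0 < f phi1" and f2: "0 < f phi2"
    and b: "(b \<longlongrightarrow> 0) F" and bpos: "\<forall>\<^sub>F y in F. 0 < b y"
  shows "((\<lambda>y. blocking f e x phi1 (b y) - blocking f e (Lam - x) phi2 (b y)) \<longlongrightarrow>
          hh e (Lam - x) (f phi2) - hh e x (f phi1)) F"
proof -
  have "((\<lambda>y. blocking f e x phi1 (b y) - blocking f e (Lam - x) phi2 (b y)) \<longlongrightarrow>
     (Dbar e (x * f phi1) * f phi1 + 1 - f phi1) - (Dbar e ((Lam - x) * f phi2) * f phi2 + 1 - f phi2)) F"
    unfolding blocking_eq using x f1 f2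
    by (intro tendsto_intros DD_lim_const[OF e _ b bpos]) auto
  then show ?thesis unfolding hh_def by (simp add: algebra_simps)
qed

lemma ev_sign_pos: fixes h :: "'a \<Rightarrow> real"
  assumes "(h \<longlongrightarrow> l) F" "0 < l" shows "\<forall>\<^sub>F y in F. 0 < h y"
  using order_tendstoD(1)[OF assms(1) assms(2)] .

lemma ev_sign_neg: fixes h :: "'a \<Rightarrow> real"
  assumes "(h \<longlongrightarrow> l) F" "l < 0" shows "\<forall>\<^sub>F y in F. h y < 0"
  using order_tendstoD(2)[OF assms(1) assms(2)] .



lemma core:
  fixes f :: "real \<Rightarrow> real" and e Lam phih phi1 phi2 :: real
  assumes e: "0 < e" and Lam: "0 < Lam" and f1: "0 < f phi1" and f12: "f phi1 \<le> f phi2"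
    and neq: "phi1 \<noteq> phi2 \<Longrightarrow> f phi1 < f phi2"
    and lo: "phi1 < finv f phih (2*e/Lam) \<longleftrightarrow> 2*e/Lam < f phi1"
    and hi: "phi1 < finv f phih (e/Lam) \<longleftrightarrow> e/Lam < f phi1"
  shows "continuous_on {0..} (Wext f e Lam phih phi1 phi2)
       \<and> continuous_on {0..} (Mext1 f e Lam phih phi1 phi2)
       \<and> continuous_on {0..} (Mext2 f e Lam phih phi1 phi2)"
proof -
  have f2: "0 < f phi2" using f1 f12 by linarith
  define W where "W = wardrop f e Lam phi1 phi2"
  define L where "L = lamTilde f e Lam phih phi1 phi2"
  define g where "g = (\<lambda>b x. blocking f e x phi1 b - blocking f e (Lam - x) phi2 b)"
  have WP: "W b \<in> {0..Lam} \<and> (\<forall>x\<in>{0..Lam}. (x < W b \<longrightarrow> g b x < 0) \<and> (W b < x \<longrightarrow> 0 < g b x))"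
    if "0 < b" for b
    unfolding W_def g_def using wardrop_props[of e Lam b f phi1 phi2, OF e Lam that f1 f2] by blast
  have evpos: "\<forall>\<^sub>F b in at b0 within {0..}. 0 < b" if "0 \<le> b0" for b0 :: real
  proof (cases "b0 = 0")
    case True then show ?thesis unfolding eventually_at_filter
      by (intro always_eventually) auto
  next
    case False then have "0 < b0" using that by simp
    then show ?thesis using order_tendstoD(1)[OF tendsto_ident_at, of 0 b0 "{0..}"] by simp
  qed
  have evWP: "\<forall>\<^sub>F b in at b0 within {0..}. W b \<in> {0..Lam} \<and>
     (\<forall>x\<in>{0..Lam}. (x < W b \<longrightarrow> g b x < 0) \<and> (W b < x \<longrightarrow> 0 < g b x))" if "0 \<le> b0" for b0 :: real
    using evpos[OF that] by eventually_elim (use WP in blast)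
  have evpos0: "\<forall>\<^sub>F b in at (0::real) within {0..}. 0 < b" using evpos[of 0] by simp
  note evWP0 = evWP[OF order_refl]
  have Wpos: "(W \<longlongrightarrow> W b0) (at b0 within {0..})" if b0: "0 < b0" for b0
  proof -
    have gcont: "((\<lambda>b. g b x) \<longlongrightarrow> g b0 x) (at b0 within {0..})" if "x \<in> {0..Lam}" for x
      unfolding g_def blocking_eq using that f1 f2 b0
      by (intro tendsto_intros DD_tendsto[OF e]) auto
    have up: "\<exists>x\<in>{0..Lam}. x < a \<and> (\<forall>\<^sub>F b in at b0 within {0..}. 0 < g b x)"
      if a: "W b0 < a" "a \<le> Lam" for a
    proof -
      let ?x = "(W b0 + a) / 2"
      have x: "?x \<in> {0..Lam}" using WP[OF b0] a by auto
      have "0 < g b0 ?x" using WP[OF b0] x a by auto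
      then show ?thesis using x a ev_sign_pos[OF gcont[OF x]] by (intro bexI[of _ ?x]) auto
    qed
    have down: "\<exists>x\<in>{0..Lam}. a < x \<and> (\<forall>\<^sub>F b in at b0 within {0..}. g b x < 0)"
      if a: "0 \<le> a" "a < W b0" for a
    proof -
      let ?x = "(W b0 + a) / 2"
      have x: "?x \<in> {0..Lam}" using WP[OF b0] a by auto
      have "g b0 ?x < 0" using WP[OF b0] x a by auto
      then show ?thesis using x a ev_sign_neg[OF gcont[OF x]] by (intro bexI[of _ ?x]) auto
    qed
    show ?thesis by (rule W_lim_helper[OF evWP up down]) (use b0 in auto)
  qed
  have W0: "(W \<longlongrightarrow> L) (at 0 within {0..})"
  proof (cases "phi1 = phi2")
    case True
    have gh: "g b (Lam/2) = 0" for b unfolding g_def True by simp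
    have "\<forall>\<^sub>F b in at 0 within {0..}. W b = Lam / 2"
      using evWP0
    proof eventually_elim
      case (elim b)
      have x: "Lam / 2 \<in> {0..Lam}" using Lam by auto
      show ?case using elim gh[of b] x by (metis less_irrefl linorder_neqE_linordered_idom)
    qed
    moreover have "L = Lam / 2" unfolding L_def lamTilde_def Let_def using True by simp
    ultimately have "\<forall>\<^sub>F b in at (0::real) within {0..}. W b = L"
      by (metis (mono_tags, lifting) eventually_mono)
    then show ?thesis by (rule tendsto_eventually)
  next
    case False
    then have f12s: "f phi1 < f phi2" using neq by blast
    let ?F = "at (0::real) within {0..}"
    have gl: "((\<lambda>b. g b x) \<longlongrightarrow> hh e (Lam - x) (f phi2) - hh e x (f phi1)) ?F"
      if "x \<in> {0..Lam}" for x
      unfolding g_def using that f1 f2 evpos0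
      by (intro glim[OF e]) auto
    have upG: "\<forall>\<^sub>F b in ?F. 0 < g b x" if "x \<in> {0..Lam}" "hh e x (f phi1) < hh e (Lam - x) (f phi2)" for x
      using that by (intro ev_sign_pos[OF gl]) auto
    have downG: "\<forall>\<^sub>F b in ?F. g b x < 0" if "x \<in> {0..Lam}" "hh e (Lam - x) (f phi2) < hh e x (f phi1)" for x
      using that by (intro ev_sign_neg[OF gl]) auto
    consider (A) "2*e/Lam < f phi1" | (B) "\<not> 2*e/Lam < f phi1" "e/Lam < f phi1"
      | (C) "\<not> e/Lam < f phi1" by blast
    then show ?thesis
    proof cases
      case A
      have L: "L = Lam / 2" unfolding L_def lamTilde_def Let_def using A lo by simp
      let ?t = "2*e/Lam"
      have t: "0 < ?t" using e Lam by simp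
      have up: "\<exists>x\<in>{0..Lam}. x < a \<and> (\<forall>\<^sub>F b in ?F. 0 < g b x)" if a: "L < a" "a \<le> Lam" for a
      proof -
        let ?x = "(Lam/2 + a) / 2"
        have x: "?x \<in> {0..Lam}" "?x < a" "Lam/2 < ?x" using a L Lam by auto
        have "e < ?x * ?t" using x(3) e Lam by (simp add: field_simps)
        then have h1: "hh e ?x (f phi1) < ?t" using hh_lt[OF t A _ e] x by auto
        have "(Lam - ?x) * ?t < e" using x(3) e Lam by (simp add: field_simps)
        then have h2: "?t < hh e (Lam - ?x) (f phi2)" using hh_gt[OF t _ _ _ e] A f12 x by auto
        show ?thesis using x upG[OF x(1)] h1 h2 by (intro bexI[of _ ?x]) auto
      qed
      have down: "\<exists>x\<in>{0..Lam}. a < x \<and> (\<forall>\<^sub>F b in ?F. g b x < 0)" if a: "0 \<le> a" "a < L" for a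
      proof -
        let ?x = "(Lam/2 + a) / 2"
        have x: "?x \<in> {0..Lam}" "a < ?x" "?x < Lam/2" using a L Lam by auto
        have "?x * ?t < e" using x(3) e Lam by (simp add: field_simps)
        then have h1: "?t < hh e ?x (f phi1)" using hh_gt[OF t A _ _ e] x by auto
        have "e < (Lam - ?x) * ?t" using x(3) e Lam by (simp add: field_simps)
        then have h2: "hh e (Lam - ?x) (f phi2) < ?t" using hh_lt[OF t _ _ e] A f12 x by auto
        show ?thesis using x downG[OF x(1)] h1 h2 by (intro bexI[of _ ?x]) auto
      qed
      show ?thesis by (rule W_lim_helper[OF evWP up down]) auto
    next
      case B
      have L: "L = Lam - e / f phi1" unfolding L_def lamTilde_def Let_def using B lo hi False by simp
      have ef: "e / f phi1 < Lam" using B f1 Lam by (simp add: field_simps)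
      have Lf: "Lam * f phi1 \<le> 2 * e" using B f1 Lam by (simp add: field_simps)
      have L0: "0 < L" using L ef by simp
      have up: "\<exists>x\<in>{0..Lam}. x < a \<and> (\<forall>\<^sub>F b in ?F. 0 < g b x)" if a: "L < a" "a \<le> Lam" for a
      proof -
        let ?x = "(L + a) / 2"
        have x: "?x \<in> {0..Lam}" "?x < a" "L < ?x" using a L0 by auto
        have h1: "hh e ?x (f phi1) \<le> f phi1" using hh_le[OF _ f1 e] x by auto
        have "Lam - ?x < e / f phi1" using x(3) L by linarith
        then have "(Lam - ?x) * f phi1 < e" using f1 by (simp add: field_simps)
        then have h2: "f phi1 < hh e (Lam - ?x) (f phi2)" using hh_gt[OF f1 f12s _ _ e] x by auto
        show ?thesis using x upG[OF x(1)] h1 h2 by (intro bexI[of _ ?x]) auto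
      qed
      have down: "\<exists>x\<in>{0..Lam}. a < x \<and> (\<forall>\<^sub>F b in ?F. g b x < 0)" if a: "0 \<le> a" "a < L" for a
      proof -
        let ?x = "(L + a) / 2"
        have Ll: "L < Lam" using L f1 e by simp
        have x: "?x \<in> {0..Lam}" "a < ?x" "?x < L" using a L0 Ll by auto
        have "?x * f phi1 < L * f phi1" using x(3) f1 by simp
        also have "L * f phi1 = Lam * f phi1 - e" using L f1 by (simp add: field_simps)
        finally have "\<not> e < ?x * f phi1" using Lf by linarith
        then have h1: "hh e ?x (f phi1) = f phi1" using hh_eq[OF f1] by blast
        have "e / f phi1 < Lam - ?x" using x(3) L by linarith
        then have "e < (Lam - ?x) * f phi1" using f1 by (simp add: field_simps)
        then have h2: "hh e (Lam - ?x) (f phi2) < f phi1" using hh_lt[OF f1 f12s _ e] x by auto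
        show ?thesis using x downG[OF x(1)] h1 h2 by (intro bexI[of _ ?x]) auto
      qed
      show ?thesis by (rule W_lim_helper[OF evWP up down]) auto
    next
      case C
      have L: "L = 0" unfolding L_def lamTilde_def Let_def using C lo hi False Lam e
        by (auto simp: field_simps)
      have Lf: "Lam * f phi1 \<le> e" using C f1 Lam by (simp add: field_simps)
      have up: "\<exists>x\<in>{0..Lam}. x < a \<and> (\<forall>\<^sub>F b in ?F. 0 < g b x)" if a: "L < a" "a \<le> Lam" for a
      proof -
        let ?x = "a / 2"
        have x: "?x \<in> {0..Lam}" "?x < a" "0 < ?x" "?x < Lam" using a L by auto
        have "?x * f phi1 \<le> Lam * f phi1" using x f1 by simp
        then have "\<not> e < ?x * f phi1" using Lf by linarith
        then have h1: "hh e ?x (f phi1) = f phi1" using hh_eq[OF f1] by blast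
        have "(Lam - ?x) * f phi1 < Lam * f phi1" using x f1 by (simp add: algebra_simps)
        then have "(Lam - ?x) * f phi1 < e" using Lf by linarith
        then have h2: "f phi1 < hh e (Lam - ?x) (f phi2)" using hh_gt[OF f1 f12s _ _ e] x by auto
        show ?thesis using x upG[OF x(1)] h1 h2 by (intro bexI[of _ ?x]) auto
      qed
      have down: "\<exists>x\<in>{0..Lam}. a < x \<and> (\<forall>\<^sub>F b in ?F. g b x < 0)" if a: "0 \<le> a" "a < L" for a
        using a L by auto
      show ?thesis by (rule W_lim_helper[OF evWP up down]) auto
    qed
  qed
  have MT: "MTilde1 f e Lam phih phi1 phi2 = min (L * f phi1) e * phi1
     \<and> MTilde2 f e Lam phih phi1 phi2 = min ((Lam - L) * f phi2) e * phi2"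
  proof -
    consider (A) "2*e/Lam < f phi1" | (D) "\<not> 2*e/Lam < f phi1" "phi1 = phi2"
      | (B) "\<not> 2*e/Lam < f phi1" "phi1 \<noteq> phi2" "e/Lam < f phi1"
      | (C) "\<not> 2*e/Lam < f phi1" "phi1 \<noteq> phi2" "\<not> e/Lam < f phi1" by blast
    then show ?thesis
    proof cases
      case A
      have L: "L = Lam / 2" unfolding L_def lamTilde_def Let_def using A lo by simp
      have "e < Lam / 2 * f phi1" using A Lam by (simp add: field_simps)
      moreover have "Lam / 2 * f phi1 \<le> Lam / 2 * f phi2" using f12 Lam by simp
      ultimately show ?thesis unfolding MTilde1_def MTilde2_def Let_def using A lo L
        by (auto simp: min_def)
    next
      case D
      have L: "L = Lam / 2" unfolding L_def lamTilde_def Let_def using D by simp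
      have "Lam / 2 * f phi1 \<le> e" using D Lam by (simp add: field_simps)
      then show ?thesis unfolding MTilde1_def MTilde2_def Let_def using D lo L
        by (auto simp: min_def)
    next
      case B
      have L: "L = Lam - e / f phi1" unfolding L_def lamTilde_def Let_def using B lo hi by simp
      have L1: "L * f phi1 = Lam * f phi1 - e" using L f1 by (simp add: field_simps)
      have "Lam * f phi1 \<le> 2 * e" using B f1 Lam by (simp add: field_simps)
      then have m1: "min (L * f phi1) e = Lam * f phi1 - e" using L1 by simp
      have "(Lam - L) * f phi2 = e * (f phi2 / f phi1)" using L f1 by simp
      moreover have "1 < f phi2 / f phi1" using neq B f1 by simp
      moreover have "e * 1 < e * (f phi2 / f phi1)"
        using \<open>1 < f phi2 / f phi1\<close> e by (rule mult_strict_left_mono)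
      ultimately have "e < (Lam - L) * f phi2" by simp
      then have m2: "min ((Lam - L) * f phi2) e = e" by simp
      show ?thesis unfolding MTilde1_def MTilde2_def Let_def mfun_def using B lo hi
        by (simp add: m1 m2)
    next
      case C
      have L: "L = 0" unfolding L_def lamTilde_def Let_def using C lo hi by simp
      show ?thesis unfolding MTilde1_def MTilde2_def Let_def using C lo hi L e
        by (auto simp: min_def)
    qed
  qed
  have evWbnd: "\<forall>\<^sub>F b in at b0 within {0..}. 0 \<le> W b \<and> W b \<le> Lam" if "0 \<le> b0" for b0 :: real
    using evWP[OF that] by eventually_elim auto
  have Wext_ev: "\<forall>\<^sub>F b in at b0 within {0..}. Wext f e Lam phih phi1 phi2 b = W b" if "0 \<le> b0" for b0 :: real
    using evpos[OF that] by eventually_elim (auto simp: Wext_def W_def)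
  have M1_ev: "\<forall>\<^sub>F b in at b0 within {0..}. Mext1 f e Lam phih phi1 phi2 b
      = (W b * f phi1) * (1 - DD e (W b * f phi1) b) * phi1" if "0 \<le> b0" for b0 :: real
    using evpos[OF that] by eventually_elim (auto simp: Mext1_def W_def matchRev_eq)
  have M2_ev: "\<forall>\<^sub>F b in at b0 within {0..}. Mext2 f e Lam phih phi1 phi2 b
      = ((Lam - W b) * f phi2) * (1 - DD e ((Lam - W b) * f phi2) b) * phi2" if "0 \<le> b0" for b0 :: real
    using evpos[OF that] by eventually_elim (auto simp: Mext2_def W_def matchRev_eq)
  have c1: "\<forall>\<^sub>F b in at b0 within {0..}. 0 \<le> W b * f phi1" if "0 \<le> b0" for b0 :: real
    using evWbnd[OF that] by eventually_elim (use f1 in auto)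
  have c2: "\<forall>\<^sub>F b in at b0 within {0..}. 0 \<le> (Lam - W b) * f phi2" if "0 \<le> b0" for b0 :: real
    using evWbnd[OF that] by eventually_elim (use f2 in auto)
  have contW: "continuous_on {0..} (Wext f e Lam phih phi1 phi2)"
    unfolding continuous_on_def
  proof
    fix b0 :: real assume b0: "b0 \<in> {0..}"
    show "(Wext f e Lam phih phi1 phi2 \<longlongrightarrow> Wext f e Lam phih phi1 phi2 b0) (at b0 within {0..})"
    proof (cases "b0 = 0")
      case True
      have "Wext f e Lam phih phi1 phi2 0 = L" by (simp add: Wext_def L_def)
      moreover have "(Wext f e Lam phih phi1 phi2 \<longlongrightarrow> L) (at 0 within {0..})"
        by (rule iffD2[OF tendsto_cong[OF Wext_ev[OF order_refl]] W0])
      ultimately show ?thesis using True by simp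
    next
      case False
      then have "0 < b0" using b0 by simp
      have "Wext f e Lam phih phi1 phi2 b0 = W b0" using False by (simp add: Wext_def W_def)
      moreover have "(Wext f e Lam phih phi1 phi2 \<longlongrightarrow> W b0) (at b0 within {0..})"
        by (rule iffD2[OF tendsto_cong[OF Wext_ev] Wpos]) (use \<open>0 < b0\<close> in auto)
      ultimately show ?thesis by simp
    qed
  qed
  have contM1: "continuous_on {0..} (Mext1 f e Lam phih phi1 phi2)"
    unfolding continuous_on_def
  proof
    fix b0 :: real assume b0: "b0 \<in> {0..}"
    show "(Mext1 f e Lam phih phi1 phi2 \<longlongrightarrow> Mext1 f e Lam phih phi1 phi2 b0) (at b0 within {0..})"
    proof (cases "b0 = 0")
      case True
      have "((\<lambda>b. (W b * f phi1) * (1 - DD e (W b * f phi1) b) * phi1) \<longlongrightarrow> min (L * f phi1) e * phi1)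
            (at 0 within {0..})"
        by (intro tendsto_intros MLim[OF e] W0 tendsto_ident_at evpos c1) auto
      then have "(Mext1 f e Lam phih phi1 phi2 \<longlongrightarrow> min (L * f phi1) e * phi1) (at 0 within {0..})"
        by (rule iffD2[OF tendsto_cong[OF M1_ev[OF order_refl]]])
      moreover have "Mext1 f e Lam phih phi1 phi2 0 = min (L * f phi1) e * phi1"
        using MT by (simp add: Mext1_def)
      ultimately show ?thesis using True by simp
    next
      case False
      then have bp: "0 < b0" using b0 by simp
      have "((\<lambda>b. (W b * f phi1) * (1 - DD e (W b * f phi1) b) * phi1) \<longlongrightarrow>
               (W b0 * f phi1) * (1 - DD e (W b0 * f phi1) b0) * phi1) (at b0 within {0..})"
        using WP[OF bp] f1 bp
        by (intro tendsto_intros DD_tendsto[OF e] Wpos tendsto_ident_at c1) auto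
      then have "(Mext1 f e Lam phih phi1 phi2 \<longlongrightarrow> (W b0 * f phi1) * (1 - DD e (W b0 * f phi1) b0) * phi1) (at b0 within {0..})"
        by (rule iffD2[OF tendsto_cong[OF M1_ev[OF less_imp_le[OF bp]]]])
      moreover have "Mext1 f e Lam phih phi1 phi2 b0 = (W b0 * f phi1) * (1 - DD e (W b0 * f phi1) b0) * phi1"
        using False by (simp add: Mext1_def W_def matchRev_eq)
      ultimately show ?thesis by simp
    qed
  qed
  have contM2: "continuous_on {0..} (Mext2 f e Lam phih phi1 phi2)"
    unfolding continuous_on_def
  proof
    fix b0 :: real assume b0: "b0 \<in> {0..}"
    show "(Mext2 f e Lam phih phi1 phi2 \<longlongrightarrow> Mext2 f e Lam phih phi1 phi2 b0) (at b0 within {0..})"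
    proof (cases "b0 = 0")
      case True
      have "((\<lambda>b. ((Lam - W b) * f phi2) * (1 - DD e ((Lam - W b) * f phi2) b) * phi2) \<longlongrightarrow>
              min ((Lam - L) * f phi2) e * phi2) (at 0 within {0..})"
        by (intro tendsto_intros MLim[OF e] W0 tendsto_ident_at evpos c2) auto
      then have "(Mext2 f e Lam phih phi1 phi2 \<longlongrightarrow> min ((Lam - L) * f phi2) e * phi2) (at 0 within {0..})"
        by (rule iffD2[OF tendsto_cong[OF M2_ev[OF order_refl]]])
      moreover have "Mext2 f e Lam phih phi1 phi2 0 = min ((Lam - L) * f phi2) e * phi2"
        using MT by (simp add: Mext2_def)
      ultimately show ?thesis using True by simp
    next
      case False
      then have bp: "0 < b0" using b0 by simp
      have "((\<lambda>b. ((Lam - W b) * f phi2) * (1 - DD e ((Lam - W b) * f phi2) b) * phi2) \<longlongrightarrow>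
               ((Lam - W b0) * f phi2) * (1 - DD e ((Lam - W b0) * f phi2) b0) * phi2) (at b0 within {0..})"
        using WP[OF bp] f2 bp
        by (intro tendsto_intros DD_tendsto[OF e] Wpos tendsto_ident_at c2) auto
      then have "(Mext2 f e Lam phih phi1 phi2 \<longlongrightarrow> ((Lam - W b0) * f phi2) * (1 - DD e ((Lam - W b0) * f phi2) b0) * phi2) (at b0 within {0..})"
        by (rule iffD2[OF tendsto_cong[OF M2_ev[OF less_imp_le[OF bp]]]])
      moreover have "Mext2 f e Lam phih phi1 phi2 b0 = ((Lam - W b0) * f phi2) * (1 - DD e ((Lam - W b0) * f phi2) b0) * phi2"
        using False by (simp add: Mext2_def W_def matchRev_eq)
      ultimately show ?thesis by simp
    qed
  qed
  show ?thesis using contW contM1 contM2 by blast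
qed


theorem theorem3:
  fixes f :: "real \<Rightarrow> real" and Lam eta p phih phi1 phi2 :: real
  assumes Lam_pos: "Lam > 0"
    and eta_pos: "eta > 0" and p_range: "0 \<le> p" "p < 1"
    and phih_pos: "phih > 0"
    and f_concave: "strictly_concave_on {0..phih} f"
    and f_decr: "\<forall>x\<in>{0..phih}. \<forall>y\<in>{0..phih}. x < y \<longrightarrow> f y < f x"
    and f_diff: "f differentiable_on {0..phih}"
    and f_bounds: "\<forall>x\<in>{0..phih}. 0 < f x \<and> f x \<le> 1"
    and f0: "f 0 = 1"
    and phi1_range: "phi1 \<in> {0..phih}" and phi2_range: "phi2 \<in> {0..phih}"
    and order: "phi1 \<ge> phi2"
  shows "continuous_on {0..} (Wext f (eta / (1 - p)) Lam phih phi1 phi2)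
       \<and> continuous_on {0..} (Mext1 f (eta / (1 - p)) Lam phih phi1 phi2)
       \<and> continuous_on {0..} (Mext2 f (eta / (1 - p)) Lam phih phi1 phi2)"
proof (rule core)
  show e: "0 < eta / (1 - p)" using eta_pos p_range by simp
  show "0 < Lam" by (rule Lam_pos)
  show "0 < f phi1" using f_bounds phi1_range by blast
  show neq: "f phi1 < f phi2" if "phi1 \<noteq> phi2"
    using f_decr phi1_range phi2_range order that by auto
  show "f phi1 \<le> f phi2" using neq by (cases "phi1 = phi2") auto
  have cont: "continuous_on {0..phih} f" using f_diff by (rule differentiable_imp_continuous_on)
  have bnd: "\<forall>x\<in>{0..phih}. f x \<le> 1" using f_bounds by blast
  show "phi1 < finv f phih (2 * (eta / (1 - p)) / Lam) \<longleftrightarrow> 2 * (eta / (1 - p)) / Lam < f phi1"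
    by (rule finv_lt[OF cont f_decr bnd f0 _ phi1_range]) (use phih_pos in simp)
  show "phi1 < finv f phih ((eta / (1 - p)) / Lam) \<longleftrightarrow> (eta / (1 - p)) / Lam < f phi1"
    by (rule finv_lt[OF cont f_decr bnd f0 _ phi1_range]) (use phih_pos in simp)
qed

end
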